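(* Let $g\in C(S^{n-1})$ be a continuous non-negative function on the sphere $S^{n-1}$, and let $U(x)\equiv|x|\,g\big(\frac{x}{|x|}\big)$ be its extension to a function on $\mathbb{R}^n$ homogeneous of degree $1$. Then $U$ is convex on $\mathbb{R}^n$ if and only if $\mathrm{Hess}\,g+gI\ge0$ on $S^{n-1}$ in the viscosity sense.
   Context: $\mathrm{Hess}\,g$ is the Riemannian Hessian on the round unit sphere and $I$ the identity (metric) on $TS^{n-1}$. The viscosity inequality means: for every $\sigma\in S^{n-1}$ and every $C^2$ function $\psi$ near $\sigma$ with $g\le\psi$ near $\sigma$ and $g(\sigma)=\psi(\sigma)$, one has $\mathrm{Hess}_\sigma\psi+\psi(\sigma)I\ge0$ as a quadratic form on $T_\sigma S^{n-1}$. ($U(0)=0$.) *)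

theory Defs
  imports "HOL-Analysis.Analysis"
begin

definition C2_on :: "'a::euclidean_space set \<Rightarrow> ('a \<Rightarrow> real) \<Rightarrow> bool" where
  "C2_on W F \<longleftrightarrow> (\<exists>(D :: 'a \<Rightarrow> 'a \<Rightarrow>\<^sub>L real) (D2 :: 'a \<Rightarrow> 'a \<Rightarrow>\<^sub>L ('a \<Rightarrow>\<^sub>L real)).
      (\<forall>x\<in>W. (F has_derivative blinfun_apply (D x)) (at x)) \<and>
      (\<forall>x\<in>W. (D has_derivative blinfun_apply (D2 x)) (at x)) \<and>
      continuous_on W D2)"

text \<open>A function on the unit sphere is C^2 near sigma: it agrees, on the sphere near sigma,
  with a C^2 function on an open neighbourhood of sigma in the ambient space
  (the sphere being an embedded submanifold).\<close>
definition C2_near_on_sphere :: "('a::euclidean_space \<Rightarrow> real) \<Rightarrow> 'a \<Rightarrow> bool" where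
  "C2_near_on_sphere \<psi> \<sigma> \<longleftrightarrow>
     (\<exists>W F. open W \<and> \<sigma> \<in> W \<and> C2_on W F \<and> (\<forall>x\<in>W \<inter> sphere 0 1. F x = \<psi> x))"

text \<open>Exponential map of the round unit sphere at sigma, applied to t*v (v tangent at sigma).\<close>
definition sphere_exp :: "'a::euclidean_space \<Rightarrow> 'a \<Rightarrow> real \<Rightarrow> 'a" where
  "sphere_exp \<sigma> v t = cos (t * norm v) *\<^sub>R \<sigma> + sin (t * norm v) *\<^sub>R (v /\<^sub>R norm v)"

text \<open>Riemannian Hessian quadratic form Hess_sigma psi (v,v) on the round sphere:
  second derivative of psi along the geodesic t \<mapsto> exp_sigma(t v) at t = 0.\<close>
definition sphere_hess :: "('a::euclidean_space \<Rightarrow> real) \<Rightarrow> 'a \<Rightarrow> 'a \<Rightarrow> real" where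
  "sphere_hess \<psi> \<sigma> v = deriv (deriv (\<lambda>t. \<psi> (sphere_exp \<sigma> v t))) 0"

definition viscosity_hess_plus_id_nonneg :: "('a::euclidean_space \<Rightarrow> real) \<Rightarrow> bool" where
  "viscosity_hess_plus_id_nonneg g \<longleftrightarrow>
     (\<forall>\<sigma>\<in>sphere 0 1. \<forall>\<psi>. C2_near_on_sphere \<psi> \<sigma> \<and>
        (\<exists>e>0. \<forall>\<tau>\<in>sphere 0 1. dist \<tau> \<sigma> < e \<longrightarrow> g \<tau> \<le> \<psi> \<tau>) \<and> g \<sigma> = \<psi> \<sigma>
        \<longrightarrow> (\<forall>v. v \<bullet> \<sigma> = 0 \<longrightarrow> sphere_hess \<psi> \<sigma> v + \<psi> \<sigma> * (norm v)\<^sup>2 \<ge> 0))"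

end

theory Submission
  imports Defs
begin

lemma chain1:
  fixes F :: "'a::euclidean_space \<Rightarrow> real"
  assumes "(F has_derivative blinfun_apply A) (at (\<gamma> t))" "(\<gamma> has_vector_derivative v) (at t)"
  shows "((\<lambda>t. F (\<gamma> t)) has_real_derivative blinfun_apply A v) (at t)"
proof -
  have "((\<lambda>t. F (\<gamma> t)) has_derivative (\<lambda>h. blinfun_apply A (h *\<^sub>R v))) (at t)"
    using has_derivative_compose[OF assms(2)[unfolded has_vector_derivative_def] assms(1)] .
  then have "((\<lambda>t. F (\<gamma> t)) has_derivative (\<lambda>h. h *\<^sub>R blinfun_apply A v)) (at t)"
    by (simp add: blinfun.scaleR_right)
  then show ?thesis
    by (simp add: has_real_derivative_iff_has_vector_derivative has_vector_derivative_def)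
qed

lemma chain2:
  fixes D :: "'a::euclidean_space \<Rightarrow> 'a \<Rightarrow>\<^sub>L real"
  assumes "(D has_derivative blinfun_apply B) (at (\<gamma> t))" "(\<gamma> has_vector_derivative v) (at t)"
    "(\<gamma>1 has_vector_derivative w) (at t)"
  shows "((\<lambda>s. blinfun_apply (D (\<gamma> s)) (\<gamma>1 s)) has_real_derivative
     blinfun_apply (blinfun_apply B v) (\<gamma>1 t) + blinfun_apply (D (\<gamma> t)) w) (at t)"
proof -
  have d1: "((\<lambda>s. D (\<gamma> s)) has_derivative (\<lambda>h. blinfun_apply B (h *\<^sub>R v))) (at t)"
    using has_derivative_compose[OF assms(2)[unfolded has_vector_derivative_def] assms(1)] .
  have d2: "(\<gamma>1 has_derivative (\<lambda>h. h *\<^sub>R w)) (at t)"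
    using assms(3) by (simp add: has_vector_derivative_def)
  have "((\<lambda>s. blinfun_apply (D (\<gamma> s)) (\<gamma>1 s)) has_derivative
     (\<lambda>h. blinfun_apply (D (\<gamma> t)) (h *\<^sub>R w) + blinfun_apply (blinfun_apply B (h *\<^sub>R v)) (\<gamma>1 t))) (at t)"
    using bounded_bilinear.FDERIV[OF bounded_bilinear_blinfun_apply d1 d2] .
  then have "((\<lambda>s. blinfun_apply (D (\<gamma> s)) (\<gamma>1 s)) has_derivative
     (\<lambda>h. h *\<^sub>R (blinfun_apply (blinfun_apply B v) (\<gamma>1 t) + blinfun_apply (D (\<gamma> t)) w))) (at t)"
    by (simp add: blinfun.scaleR_right blinfun.scaleR_left algebra_simps)
  then show ?thesis
    by (simp add: has_real_derivative_iff_has_vector_derivative has_vector_derivative_def)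
qed


definition Uf :: "('a::euclidean_space \<Rightarrow> real) \<Rightarrow> 'a \<Rightarrow> real" where
  "Uf g x = norm x * g (x /\<^sub>R norm x)"

lemma Uf_hom:
  assumes "c > 0" shows "Uf g (c *\<^sub>R x) = c * Uf g x"
proof (cases "x = 0")
  case True then show ?thesis by (simp add: Uf_def)
next
  case False
  have "(c *\<^sub>R x) /\<^sub>R norm (c *\<^sub>R x) = x /\<^sub>R norm x"
    using assms False by (simp add: divide_inverse_commute)
  then show ?thesis using assms by (simp only: Uf_def) simp
qed

lemma Uf_sphere: "norm x = 1 \<Longrightarrow> Uf g x = g x"
  by (simp add: Uf_def)

lemma geo_d1:
  "((\<lambda>t. sphere_exp \<sigma> v t) has_vector_derivative
     (- (norm v * sin (t * norm v))) *\<^sub>R \<sigma> + (norm v * cos (t * norm v)) *\<^sub>R (v /\<^sub>R norm v)) (at t)"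
  unfolding sphere_exp_def
  by (auto intro!: derivative_eq_intros simp: algebra_simps)

lemma geo_d2:
  "((\<lambda>t. (- (norm v * sin (t * norm v))) *\<^sub>R \<sigma> + (norm v * cos (t * norm v)) *\<^sub>R (v /\<^sub>R norm v)) has_vector_derivative
     (- (norm v ^ 2 * cos (t * norm v))) *\<^sub>R \<sigma> + (- (norm v ^ 2 * sin (t * norm v))) *\<^sub>R (v /\<^sub>R norm v)) (at t)"
  by (auto intro!: derivative_eq_intros simp: algebra_simps power2_eq_square)

lemma geo_norm:
  assumes "norm \<sigma> = 1" "v \<bullet> \<sigma> = 0" "v \<noteq> 0"
  shows "norm (sphere_exp \<sigma> v t) = 1"
proof -
  let ?u = "v /\<^sub>R norm v"
  have u: "norm ?u = 1" using assms by simp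
  have o1: "\<sigma> \<bullet> v = 0" using assms(2) by (simp add: inner_commute)
  have o2: "v \<bullet> \<sigma> = 0" using assms(2) .
  have "(norm (sphere_exp \<sigma> v t))\<^sup>2 = (cos (t * norm v))\<^sup>2 * (norm \<sigma>)\<^sup>2 + (sin (t * norm v))\<^sup>2 * (norm ?u)\<^sup>2"
    unfolding sphere_exp_def power2_norm_eq_inner
    by (simp add: inner_add_left inner_add_right o1 o2 algebra_simps power2_eq_square)
  also have "\<dots> = 1" using u assms by simp
  finally show ?thesis using norm_ge_zero[of "sphere_exp \<sigma> v t"] by (auto simp: power2_eq_1_iff)
qed

lemma cont_ev:
  assumes "continuous (at a) f" "open S" "f a \<in> S"
  shows "eventually (\<lambda>t. f t \<in> S) (nhds a)"
proof -
  have "eventually (\<lambda>t. f t \<in> S) (at a)"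
    using assms unfolding continuous_at tendsto_def by blast
  then have "eventually (\<lambda>t. t \<noteq> a \<longrightarrow> f t \<in> S) (nhds a)"
    by (simp add: eventually_at_filter)
  then show ?thesis
    by (rule eventually_mono) (use assms(3) in auto)
qed

lemma sphere_exp_0: "sphere_exp \<sigma> v 0 = \<sigma>"
  by (simp add: sphere_exp_def)

lemma easy_dir:
  fixes g :: "'a::euclidean_space \<Rightarrow> real"
  assumes cvx: "convex_on UNIV (Uf g)" and \<sigma>: "norm \<sigma> = 1"
    and C2: "C2_near_on_sphere \<psi> \<sigma>"
    and touch: "\<forall>\<tau>\<in>sphere 0 1. dist \<tau> \<sigma> < e \<longrightarrow> g \<tau> \<le> \<psi> \<tau>" and e: "e > 0"
    and eq: "g \<sigma> = \<psi> \<sigma>" and v: "v \<bullet> \<sigma> = 0"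
  shows "sphere_hess \<psi> \<sigma> v + \<psi> \<sigma> * (norm v)\<^sup>2 \<ge> 0"
proof (cases "v = 0")
  case True
  have "(\<lambda>t. \<psi> (sphere_exp \<sigma> v t)) = (\<lambda>t. \<psi> \<sigma>)"
    using True by (simp add: sphere_exp_def)
  then have "sphere_hess \<psi> \<sigma> v = 0"
    unfolding sphere_hess_def by (simp add: DERIV_imp_deriv[OF DERIV_const])
  then show ?thesis using True by simp
next
  case False
  define k where "k = norm v"
  have k: "k > 0" using False by (simp add: k_def)
  define u where "u = v /\<^sub>R norm v"
  define \<gamma> where "\<gamma> = sphere_exp \<sigma> v"
  define \<gamma>1 where "\<gamma>1 = (\<lambda>t. (- (norm v * sin (t * norm v))) *\<^sub>R \<sigma> + (norm v * cos (t * norm v)) *\<^sub>R (v /\<^sub>R norm v))"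
  have d1: "\<And>t. (\<gamma> has_vector_derivative \<gamma>1 t) (at t)"
    unfolding \<gamma>_def \<gamma>1_def by (rule geo_d1)
  have d2: "(\<gamma>1 has_vector_derivative (- (k^2)) *\<^sub>R \<sigma>) (at 0)"
    using geo_d2[of v \<sigma> 0] unfolding \<gamma>1_def k_def by simp
  have g10: "\<gamma>1 0 = v" using False by (simp add: \<gamma>1_def)
  have g0: "\<gamma> 0 = \<sigma>" by (simp add: \<gamma>_def sphere_exp_0)
  have gs: "\<And>t. norm (\<gamma> t) = 1" unfolding \<gamma>_def using geo_norm \<sigma> v False by blast
  obtain W F D D2 where W: "open W" "\<sigma> \<in> W" and FD: "\<forall>x\<in>W. (F has_derivative blinfun_apply (D x)) (at x)"
    and DD: "\<forall>x\<in>W. (D has_derivative blinfun_apply (D2 x)) (at x)"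
    and Fpsi: "\<forall>x\<in>W \<inter> sphere 0 1. F x = \<psi> x"
    using C2 unfolding C2_near_on_sphere_def C2_on_def by blast
  have cont: "continuous (at 0) \<gamma>"
    using d1 has_vector_derivative_continuous by blast
  have ev1: "eventually (\<lambda>t. \<gamma> t \<in> W \<inter> ball \<sigma> e) (nhds 0)"
    using cont_ev[OF cont, of "W \<inter> ball \<sigma> e"] W g0 e by auto
  have ev2: "eventually (\<lambda>t. cos (k * t) \<in> {0<..}) (nhds 0)"
    by (rule cont_ev) (auto intro!: continuous_intros)
  obtain \<rho> where \<rho>: "\<rho> > 0" and \<rho>P: "\<And>t. dist t 0 < \<rho> \<Longrightarrow> \<gamma> t \<in> W \<inter> ball \<sigma> e \<and> cos (k * t) > 0"
    using eventually_conj[OF ev1 ev2] unfolding eventually_nhds_metric by blast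
  define G where "G = (\<lambda>t. F (\<gamma> t))"
  define G1 where "G1 = (\<lambda>t. blinfun_apply (D (\<gamma> t)) (\<gamma>1 t))"
  define L where "L = blinfun_apply (blinfun_apply (D2 \<sigma>) v) v - k^2 * blinfun_apply (D \<sigma>) \<sigma>"
  have dG: "\<And>t. \<bar>t\<bar> < \<rho> \<Longrightarrow> DERIV G t :> G1 t"
  proof -
    fix t :: real assume "\<bar>t\<bar> < \<rho>"
    then have "\<gamma> t \<in> W" using \<rho>P[of t] by auto
    then show "DERIV G t :> G1 t" unfolding G_def G1_def
      using chain1[OF _ d1] FD by blast
  qed
  have dG1: "DERIV G1 0 :> L"
  proof -
    have "DERIV G1 0 :> blinfun_apply (blinfun_apply (D2 (\<gamma> 0)) (\<gamma>1 0)) (\<gamma>1 0) + blinfun_apply (D (\<gamma> 0)) ((- (k^2)) *\<^sub>R \<sigma>)"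
      unfolding G1_def using chain2[OF _ d1 d2] DD W g0 by auto
    then show ?thesis unfolding L_def using g0 g10 by (simp add: blinfun.scaleR_right blinfun.minus_right)
  qed

  have inW: "\<And>t. \<bar>t\<bar> < \<rho> \<Longrightarrow> \<gamma> t \<in> W \<and> dist (\<gamma> t) \<sigma> < e \<and> cos (k * t) > 0"
    using \<rho>P by (auto simp: dist_commute)
  have eqpsi: "\<And>t. \<bar>t\<bar> < \<rho> \<Longrightarrow> \<psi> (\<gamma> t) = G t"
  proof -
    fix t :: real assume "\<bar>t\<bar> < \<rho>"
    then have "\<gamma> t \<in> W \<inter> sphere 0 1" using inW gs by auto
    then show "\<psi> (\<gamma> t) = G t" using Fpsi unfolding G_def by metis
  qed
  have touch_t: "\<And>t. \<bar>t\<bar> < \<rho> \<Longrightarrow> g (\<gamma> t) \<le> G t"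
  proof -
    fix t :: real assume t: "\<bar>t\<bar> < \<rho>"
    then have "\<gamma> t \<in> sphere 0 1" "dist (\<gamma> t) \<sigma> < e" using inW gs by auto
    then have "g (\<gamma> t) \<le> \<psi> (\<gamma> t)" using touch by blast
    then show "g (\<gamma> t) \<le> G t" using eqpsi[OF t] by simp
  qed
  have ev3: "eventually (\<lambda>t. deriv (\<lambda>s. \<psi> (\<gamma> s)) t = G1 t) (nhds 0)"
    unfolding eventually_nhds_metric
  proof (intro exI[of _ \<rho>] conjI allI impI)
    show "\<rho> > 0" by (rule \<rho>)
    fix t :: real assume "dist t 0 < \<rho>"
    then have t: "t \<in> {-\<rho><..<\<rho>}" by auto
    have "eventually (\<lambda>s. s \<in> {-\<rho><..<\<rho>}) (nhds t)"
      by (rule eventually_nhds_in_open) (use t in auto)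
    then have "eventually (\<lambda>s. \<psi> (\<gamma> s) = G s) (nhds t)"
      by (rule eventually_mono) (auto intro!: eqpsi)
    then have "deriv (\<lambda>s. \<psi> (\<gamma> s)) t = deriv G t"
      by (rule deriv_cong_ev) simp
    also have "\<dots> = G1 t" using dG[of t] t by (auto intro: DERIV_imp_deriv)
    finally show "deriv (\<lambda>s. \<psi> (\<gamma> s)) t = G1 t" .
  qed
  have hess: "sphere_hess \<psi> \<sigma> v = L"
  proof -
    have "sphere_hess \<psi> \<sigma> v = deriv (deriv (\<lambda>s. \<psi> (\<gamma> s))) 0"
      by (simp add: sphere_hess_def \<gamma>_def)
    also have "\<dots> = deriv G1 0" by (rule deriv_cong_ev[OF ev3]) simp
    also have "\<dots> = L" by (rule DERIV_imp_deriv[OF dG1])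
    finally show ?thesis .
  qed
  have psi0: "\<psi> \<sigma> = G 0" using eqpsi[of 0] g0 \<rho> by simp
  have "L + k^2 * G 0 \<ge> 0"
  proof (rule ccontr)
    assume "\<not> ?thesis"
    then have neg: "L + L + 2 * k * k * G 0 < 0" by (simp add: power2_eq_square)
    have um: "\<And>x::real. DERIV uminus x :> -1" using DERIV_minus[OF DERIV_ident] by blast
    define Xa where "Xa = (\<lambda>t. G1 t - G1 (- t) + 2 * k * sin (k * t) * G 0)"
    define Xb where "Xb = (\<lambda>t. G t + G (- t) - 2 * cos (k * t) * G 0)"
    have m: "DERIV (\<lambda>t. G1 (- t)) 0 :> L * (-1)"
      using DERIV_chain2[OF _ um[of 0], where f=G1 and Da=L] dG1 by simp
    have s: "DERIV (\<lambda>t. 2 * k * sin (k * t) * G 0) 0 :> 2 * k * k * G 0"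
      by (auto intro!: derivative_eq_intros)
    have "DERIV Xa 0 :> L - L * (-1) + 2 * k * k * G 0"
      unfolding Xa_def by (intro DERIV_add DERIV_diff dG1 m s)
    then have dXa: "DERIV Xa 0 :> L + L + 2 * k * k * G 0" by simp
    obtain d where d: "d > 0" and dd: "\<And>h. h > 0 \<Longrightarrow> h < d \<Longrightarrow> Xa 0 > Xa (0 + h)"
      using DERIV_neg_dec_right[OF dXa neg] by blast
    have Xa0: "Xa 0 = 0" by (simp add: Xa_def)
    define t where "t = min d \<rho> / 2"
    have t: "0 < t" "t < d" "t < \<rho>" using d \<rho> by (auto simp: t_def)
    have dXb: "DERIV Xb x :> Xa x" if "0 \<le> x" "x \<le> t" for x
    proof -
      have x: "\<bar>x\<bar> < \<rho>" "\<bar>-x\<bar> < \<rho>" using that t by auto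
      have a: "DERIV (\<lambda>t. G (- t)) x :> G1 (- x) * (-1)"
        using DERIV_chain2[OF _ um[of x], where f=G and Da="G1 (-x)"] dG[OF x(2)] by simp
      have b: "DERIV (\<lambda>t. 2 * cos (k * t) * G 0) x :> - (2 * k * sin (k * x) * G 0)"
        by (auto intro!: derivative_eq_intros)
      have "DERIV Xb x :> G1 x + G1 (- x) * (-1) - - (2 * k * sin (k * x) * G 0)"
        unfolding Xb_def by (intro DERIV_add DERIV_diff dG x a b)
      then show ?thesis by (simp add: Xa_def)
    qed
    obtain z where z: "0 < z" "z < t" and mvt: "Xb t - Xb 0 = (t - 0) * Xa z"
      using MVT2[of 0 t Xb Xa] dXb t by blast
    have "Xa z < 0" using dd[of z] z t Xa0 by simp
    then have "t * Xa z < 0" using t by (simp add: mult_pos_neg)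
    then have "Xb t < Xb 0" using mvt by simp
    moreover have "Xb 0 = 0" by (simp add: Xb_def)
    moreover have "Xb t \<ge> 0"
    proof -
      define c where "c = cos (k * t)"
      have c: "c > 0" using inW[of t] t \<rho> unfolding c_def by auto
      define r where "r = sin (k * t) / c"
      have e0: "\<And>t. \<gamma> t = cos (k * t) *\<^sub>R \<sigma> + sin (k * t) *\<^sub>R u"
        by (simp add: \<gamma>_def sphere_exp_def u_def k_def mult.commute)
      have cr: "c * r = sin (k * t)" using c by (simp add: r_def)
      have e1: "\<gamma> t = c *\<^sub>R (\<sigma> + r *\<^sub>R u)"
        using cr by (simp add: e0 c_def scaleR_add_right)
      have e2: "\<gamma> (- t) = c *\<^sub>R (\<sigma> - r *\<^sub>R u)"
        using cr by (simp add: e0 c_def scaleR_diff_right)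
      have "g (\<gamma> t) = c * Uf g (\<sigma> + r *\<^sub>R u)"
        using Uf_sphere[OF gs[of t], of g] unfolding e1 Uf_hom[OF c] by simp
      moreover have "g (\<gamma> (- t)) = c * Uf g (\<sigma> - r *\<^sub>R u)"
        using Uf_sphere[OF gs[of "-t"], of g] unfolding e2 Uf_hom[OF c] by simp
      moreover have "Uf g \<sigma> \<le> (1 - 1/2) * Uf g (\<sigma> + r *\<^sub>R u) + (1/2) * Uf g (\<sigma> - r *\<^sub>R u)"
      proof -
        have "\<sigma> = (1 - 1/2) *\<^sub>R (\<sigma> + r *\<^sub>R u) + (1/2) *\<^sub>R (\<sigma> - r *\<^sub>R u)"
          by (simp add: algebra_simps flip: scaleR_add_left)
        then show ?thesis using convex_onD[OF cvx, of "1/2" "\<sigma> + r *\<^sub>R u" "\<sigma> - r *\<^sub>R u"] by simp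
      qed
      moreover have "Uf g \<sigma> = G 0" using Uf_sphere[OF \<sigma>] eq psi0 by simp
      moreover have "g (\<gamma> t) \<le> G t" "g (\<gamma> (- t)) \<le> G (- t)" using touch_t t by auto
      ultimately have "G t + G (- t) \<ge> c * (Uf g (\<sigma> + r *\<^sub>R u) + Uf g (\<sigma> - r *\<^sub>R u))"
        and "2 * G 0 \<le> Uf g (\<sigma> + r *\<^sub>R u) + Uf g (\<sigma> - r *\<^sub>R u)"
        by (simp_all add: algebra_simps)
      then have "G t + G (- t) \<ge> c * (2 * G 0)"
        using mult_left_mono[of "2 * G 0" "Uf g (\<sigma> + r *\<^sub>R u) + Uf g (\<sigma> - r *\<^sub>R u)" c] c by linarith
      then have "G t + G (- t) \<ge> 2 * c * G 0" by simp
      then show ?thesis by (simp add: Xb_def c_def)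
    qed
    ultimately show False by simp
  qed
  then show ?thesis using hess psi0 by (simp add: k_def mult.commute)
qed

lemma hess_formula:
  assumes W: "open W" "\<sigma> \<in> W" and FD: "\<forall>x\<in>W. (F has_derivative blinfun_apply (D x)) (at x)"
    and DD: "\<forall>x\<in>W. (D has_derivative blinfun_apply (D2 x)) (at x)"
    and Fpsi: "\<forall>x\<in>W \<inter> sphere 0 1. F x = \<psi> x"
    and \<sigma>: "norm \<sigma> = 1" and v: "v \<bullet> \<sigma> = 0" "v \<noteq> 0"
  shows "sphere_hess \<psi> \<sigma> v = blinfun_apply (blinfun_apply (D2 \<sigma>) v) v - (norm v)^2 * blinfun_apply (D \<sigma>) \<sigma>"
proof -
  define k where "k = norm v"
  define \<gamma> where "\<gamma> = sphere_exp \<sigma> v"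
  define \<gamma>1 where "\<gamma>1 = (\<lambda>t. (- (norm v * sin (t * norm v))) *\<^sub>R \<sigma> + (norm v * cos (t * norm v)) *\<^sub>R (v /\<^sub>R norm v))"
  have d1: "\<And>t. (\<gamma> has_vector_derivative \<gamma>1 t) (at t)"
    unfolding \<gamma>_def \<gamma>1_def by (rule geo_d1)
  have d2: "(\<gamma>1 has_vector_derivative (- (k^2)) *\<^sub>R \<sigma>) (at 0)"
    using geo_d2[of v \<sigma> 0] unfolding \<gamma>1_def k_def by simp
  have g10: "\<gamma>1 0 = v" using v by (simp add: \<gamma>1_def)
  have g0: "\<gamma> 0 = \<sigma>" by (simp add: \<gamma>_def sphere_exp_0)
  have gs: "\<And>t. norm (\<gamma> t) = 1" unfolding \<gamma>_def using geo_norm \<sigma> v by blast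
  have cont: "continuous (at 0) \<gamma>"
    using d1 has_vector_derivative_continuous by blast
  have ev1: "eventually (\<lambda>t. \<gamma> t \<in> W) (nhds 0)"
    using cont_ev[OF cont, of W] W g0 by auto
  obtain \<rho> where \<rho>: "\<rho> > 0" and \<rho>P: "\<And>t. dist t 0 < \<rho> \<Longrightarrow> \<gamma> t \<in> W"
    using ev1 unfolding eventually_nhds_metric by blast
  define G where "G = (\<lambda>t. F (\<gamma> t))"
  define G1 where "G1 = (\<lambda>t. blinfun_apply (D (\<gamma> t)) (\<gamma>1 t))"
  define L where "L = blinfun_apply (blinfun_apply (D2 \<sigma>) v) v - k^2 * blinfun_apply (D \<sigma>) \<sigma>"
  have dG: "\<And>t. \<bar>t\<bar> < \<rho> \<Longrightarrow> DERIV G t :> G1 t"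
  proof -
    fix t :: real assume "\<bar>t\<bar> < \<rho>"
    then have "\<gamma> t \<in> W" using \<rho>P[of t] by auto
    then show "DERIV G t :> G1 t" unfolding G_def G1_def
      using chain1[OF _ d1] FD by blast
  qed
  have dG1: "DERIV G1 0 :> L"
  proof -
    have "DERIV G1 0 :> blinfun_apply (blinfun_apply (D2 (\<gamma> 0)) (\<gamma>1 0)) (\<gamma>1 0) + blinfun_apply (D (\<gamma> 0)) ((- (k^2)) *\<^sub>R \<sigma>)"
      unfolding G1_def using chain2[OF _ d1 d2] DD W g0 by auto
    then show ?thesis unfolding L_def using g0 g10 by (simp add: blinfun.scaleR_right blinfun.minus_right)
  qed
  have eqpsi: "\<And>t. \<bar>t\<bar> < \<rho> \<Longrightarrow> \<psi> (\<gamma> t) = G t"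
  proof -
    fix t :: real assume "\<bar>t\<bar> < \<rho>"
    then have "\<gamma> t \<in> W \<inter> sphere 0 1" using \<rho>P gs by auto
    then show "\<psi> (\<gamma> t) = G t" using Fpsi unfolding G_def by metis
  qed
  have ev3: "eventually (\<lambda>t. deriv (\<lambda>s. \<psi> (\<gamma> s)) t = G1 t) (nhds 0)"
    unfolding eventually_nhds_metric
  proof (intro exI[of _ \<rho>] conjI allI impI)
    show "\<rho> > 0" by (rule \<rho>)
    fix t :: real assume "dist t 0 < \<rho>"
    then have t: "t \<in> {-\<rho><..<\<rho>}" by auto
    have "eventually (\<lambda>s. s \<in> {-\<rho><..<\<rho>}) (nhds t)"
      by (rule eventually_nhds_in_open) (use t in auto)
    then have "eventually (\<lambda>s. \<psi> (\<gamma> s) = G s) (nhds t)"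
      by (rule eventually_mono) (auto intro!: eqpsi)
    then have "deriv (\<lambda>s. \<psi> (\<gamma> s)) t = deriv G t"
      by (rule deriv_cong_ev) simp
    also have "\<dots> = G1 t" using dG[of t] t by (auto intro: DERIV_imp_deriv)
    finally show "deriv (\<lambda>s. \<psi> (\<gamma> s)) t = G1 t" .
  qed
  have "sphere_hess \<psi> \<sigma> v = deriv (deriv (\<lambda>s. \<psi> (\<gamma> s))) 0"
    by (simp add: sphere_hess_def \<gamma>_def)
  also have "\<dots> = deriv G1 0" by (rule deriv_cong_ev[OF ev3]) simp
  also have "\<dots> = L" by (rule DERIV_imp_deriv[OF dG1])
  finally show ?thesis by (simp add: L_def k_def)
qed

definition zp :: "'a::euclidean_space \<Rightarrow> 'a \<Rightarrow> 'a \<Rightarrow> 'a" where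
  "zp e w y = y - (y \<bullet> e) *\<^sub>R e - (y \<bullet> w) *\<^sub>R w"

lemma zp_bl: "bounded_linear (zp e w)"
  unfolding zp_def by (intro bounded_linear_intros)

lemma zp_inner:
  assumes "e \<bullet> e = 1" "w \<bullet> w = 1" "e \<bullet> w = 0"
  shows "zp e w y \<bullet> zp e w h = zp e w y \<bullet> h"
  using assms unfolding zp_def
  by (simp add: inner_diff_left inner_diff_right inner_commute algebra_simps)

lemma quad_C2:
  fixes p :: "'a::euclidean_space"
  assumes "e \<bullet> e = 1" "w \<bullet> w = 1" "e \<bullet> w = 0"
  shows "\<exists>D D2. (\<forall>x. ((\<lambda>y. c0 + p \<bullet> y + M * (zp e w y \<bullet> zp e w y)) has_derivative blinfun_apply (D x)) (at x))
     \<and> (\<forall>x. (D has_derivative blinfun_apply (D2 x)) (at x)) \<and> continuous_on UNIV D2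
     \<and> (\<forall>y h. blinfun_apply (D y) h = p \<bullet> h + 2 * M * (zp e w y \<bullet> h))
     \<and> (\<forall>y k h. blinfun_apply (blinfun_apply (D2 y) k) h = 2 * M * (zp e w k \<bullet> h))"
proof -
  let ?z = "zp e w"
  have bz: "bounded_linear ?z" by (rule zp_bl)
  define D where "D = (\<lambda>y. blinfun_inner_right (p + (2 * M) *\<^sub>R ?z y))"
  have blB: "bounded_linear (\<lambda>k. blinfun_inner_right ((2 * M) *\<^sub>R ?z k))"
    by (intro bounded_linear_compose[OF bounded_linear_blinfun_inner_right] bounded_linear_compose[OF bounded_linear_scaleR_right bz])
  define B where "B = Blinfun (\<lambda>k. blinfun_inner_right ((2 * M) *\<^sub>R ?z k))"
  have Bapp: "blinfun_apply B = (\<lambda>k. blinfun_inner_right ((2 * M) *\<^sub>R ?z k))"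
    unfolding B_def using blB by (simp add: bounded_linear_Blinfun_apply)
  have dF: "((\<lambda>y. c0 + p \<bullet> y + M * (?z y \<bullet> ?z y)) has_derivative blinfun_apply (D x)) (at x)" for x
  proof -
    have dz: "(?z has_derivative ?z) (at x)" by (rule bounded_linear.has_derivative[OF bz has_derivative_ident])
    have "((\<lambda>y. ?z y \<bullet> ?z y) has_derivative (\<lambda>h. ?z x \<bullet> ?z h + ?z h \<bullet> ?z x)) (at x)"
      using bounded_bilinear.FDERIV[OF bounded_bilinear_inner dz dz] .
    then have "((\<lambda>y. c0 + p \<bullet> y + M * (?z y \<bullet> ?z y)) has_derivative
        (\<lambda>h. 0 + p \<bullet> h + M * (?z x \<bullet> ?z h + ?z h \<bullet> ?z x))) (at x)"
      by (intro derivative_intros dz)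
    moreover have "(\<lambda>h. 0 + p \<bullet> h + M * (?z x \<bullet> ?z h + ?z h \<bullet> ?z x)) = blinfun_apply (D x)"
      using zp_inner[OF assms, of x] by (auto simp: D_def fun_eq_iff inner_add_left inner_commute algebra_simps zp_inner[OF assms])
    ultimately show ?thesis by simp
  qed
  have dD: "(D has_derivative blinfun_apply B) (at x)" for x
  proof -
    have "(D has_derivative (\<lambda>k. blinfun_inner_right (0 + (2 * M) *\<^sub>R ?z k))) (at x)"
      unfolding D_def
      by (intro bounded_linear.has_derivative[OF bounded_linear_blinfun_inner_right] derivative_intros
          bounded_linear.has_derivative[OF bz] has_derivative_ident)
    then show ?thesis by (simp add: Bapp)
  qed
  show ?thesis
    by (intro exI[of _ D] exI[of _ "\<lambda>_. B"] conjI allI dF dD continuous_on_const)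
      (simp_all add: D_def Bapp inner_add_left algebra_simps)
qed

lemma quad_C2near:
  assumes "e \<bullet> e = 1" "w \<bullet> w = 1" "e \<bullet> w = 0"
  shows "C2_near_on_sphere (\<lambda>y. c0 + p \<bullet> y + M * (zp e w y \<bullet> zp e w y)) \<sigma>"
proof -
  obtain D D2 where "\<forall>x. ((\<lambda>y. c0 + p \<bullet> y + M * (zp e w y \<bullet> zp e w y)) has_derivative blinfun_apply (D x)) (at x)"
     "\<forall>x. (D has_derivative blinfun_apply (D2 x)) (at x)" "continuous_on UNIV D2"
    using quad_C2[OF assms, of c0 p M] by blast
  then show ?thesis unfolding C2_near_on_sphere_def C2_on_def
    by (intro exI[of _ UNIV] exI[of _ "\<lambda>y. c0 + p \<bullet> y + M * (zp e w y \<bullet> zp e w y)"] conjI) blast+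
qed

lemma quad_hess:
  assumes "e \<bullet> e = 1" "w \<bullet> w = 1" "e \<bullet> w = 0"
    and \<sigma>: "norm \<sigma> = 1" and v: "v \<bullet> \<sigma> = 0" "v \<noteq> 0"
  shows "sphere_hess (\<lambda>y. c0 + p \<bullet> y + M * (zp e w y \<bullet> zp e w y)) \<sigma> v
     = 2 * M * (zp e w v \<bullet> v) - (norm v)^2 * (p \<bullet> \<sigma> + 2 * M * (zp e w \<sigma> \<bullet> \<sigma>))"
proof -
  obtain D D2 where a: "\<forall>x. ((\<lambda>y. c0 + p \<bullet> y + M * (zp e w y \<bullet> zp e w y)) has_derivative blinfun_apply (D x)) (at x)"
     "\<forall>x. (D has_derivative blinfun_apply (D2 x)) (at x)"
     and b: "\<forall>y h. blinfun_apply (D y) h = p \<bullet> h + 2 * M * (zp e w y \<bullet> h)"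
     "\<forall>y k h. blinfun_apply (blinfun_apply (D2 y) k) h = 2 * M * (zp e w k \<bullet> h)"
    using quad_C2[OF assms(1-3), of c0 p M] by blast
  have "sphere_hess (\<lambda>y. c0 + p \<bullet> y + M * (zp e w y \<bullet> zp e w y)) \<sigma> v =
     blinfun_apply (blinfun_apply (D2 \<sigma>) v) v - (norm v)^2 * blinfun_apply (D \<sigma>) \<sigma>"
    by (rule hess_formula[where W=UNIV]) (use a \<sigma> v in auto)
  then show ?thesis using b by simp
qed

lemma Uf_cont:
  assumes "continuous_on (sphere 0 1) g"
  shows "continuous_on (- {0}) (Uf g)"
proof -
  have c1: "continuous_on (- {0}) (\<lambda>x::'a. x /\<^sub>R norm x)"
    by (intro continuous_intros) auto
  have "continuous_on (- {0}) (\<lambda>x::'a. g (x /\<^sub>R norm x))"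
    by (rule continuous_on_compose2[OF assms c1]) (auto simp: field_simps split: if_splits)
  then show ?thesis unfolding Uf_def[abs_def]
    by (intro continuous_intros)
qed

lemma zp_decomp:
  assumes "q \<bullet> e = 1" shows "q = e + (q \<bullet> w) *\<^sub>R w + zp e w q"
  using assms by (simp add: zp_def)

lemma zp_scale: "zp e w (c *\<^sub>R q) = c *\<^sub>R zp e w q"
  by (simp add: zp_def algebra_simps)

lemma zp_in_span: "zp e w (a *\<^sub>R e + b *\<^sub>R w) = 0"
  if "e \<bullet> e = 1" "w \<bullet> w = 1" "e \<bullet> w = 0"
  using that by (simp add: zp_def inner_add_left inner_commute algebra_simps)

lemma touch_contra:
  assumes V: "viscosity_hess_plus_id_nonneg g"
    and ee: "e \<bullet> e = 1" "w \<bullet> w = 1" "e \<bullet> w = 0"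
    and \<epsilon>: "\<epsilon> > 0" and M: "M \<ge> 0"
    and \<sigma>: "norm \<sigma> = 1" "\<sigma> \<bullet> e > 0"
    and r: "r > 0" and touch: "\<forall>\<tau>\<in>sphere 0 1. dist \<tau> \<sigma> < r \<longrightarrow> g \<tau> \<le> - \<epsilon> + p \<bullet> \<tau> + M * (zp e w \<tau> \<bullet> zp e w \<tau>)"
    and eq: "g \<sigma> = - \<epsilon> + p \<bullet> \<sigma> + M * (zp e w \<sigma> \<bullet> zp e w \<sigma>)"
  shows False
proof -
  define \<psi> where "\<psi> = (\<lambda>y. - \<epsilon> + p \<bullet> y + M * (zp e w y \<bullet> zp e w y))"
  define v where "v = (- (\<sigma> \<bullet> w)) *\<^sub>R e + (\<sigma> \<bullet> e) *\<^sub>R w"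
  have v\<sigma>: "v \<bullet> \<sigma> = 0" by (simp add: v_def inner_add_left inner_diff_left inner_commute[of e \<sigma>] inner_commute[of w \<sigma>])
  have "v \<bullet> w = \<sigma> \<bullet> e" using ee by (simp add: v_def inner_add_left inner_diff_left inner_diff_right inner_commute[of w e])
  then have v0: "v \<noteq> 0" using \<sigma> by auto
  have zv: "zp e w v = 0" unfolding v_def by (rule zp_in_span[OF ee])
  have s\<sigma>: "\<sigma> \<in> sphere 0 1" using \<sigma> by simp
  have "sphere_hess \<psi> \<sigma> v + \<psi> \<sigma> * (norm v)\<^sup>2 \<ge> 0"
    using V s\<sigma> unfolding viscosity_hess_plus_id_nonneg_def
    using quad_C2near[OF ee, of "- \<epsilon>" p M \<sigma>] touch eq r v\<sigma> unfolding \<psi>_def by blast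
  moreover have "sphere_hess \<psi> \<sigma> v = - ((norm v)^2 * (p \<bullet> \<sigma> + 2 * M * (zp e w \<sigma> \<bullet> zp e w \<sigma>)))"
    unfolding \<psi>_def using quad_hess[OF ee \<sigma>(1) v\<sigma> v0, of "- \<epsilon>" p M] zv zp_inner[OF ee, of \<sigma> \<sigma>] by simp
  ultimately have "0 \<le> (norm v)^2 * (- \<epsilon> - M * (zp e w \<sigma> \<bullet> zp e w \<sigma>))"
    by (simp add: \<psi>_def algebra_simps)
  moreover have "(norm v)^2 > 0" using v0 by simp
  moreover have "- \<epsilon> - M * (zp e w \<sigma> \<bullet> zp e w \<sigma>) < 0" using \<epsilon> M mult_nonneg_nonneg[OF M inner_ge_zero[of "zp e w \<sigma>"]] by linarith
  ultimately show False using mult_pos_neg[of "(norm v)^2" "- \<epsilon> - M * (zp e w \<sigma> \<bullet> zp e w \<sigma>)"] by linarith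
qed

lemma Hid:
  assumes \<tau>: "norm \<tau> = 1" and a: "a = \<tau> \<bullet> e" "a > 0"
  shows "a * (Uf g ((1/a) *\<^sub>R \<tau>) - (\<alpha> + \<beta> * (((1/a) *\<^sub>R \<tau>) \<bullet> w)) + \<epsilon> * norm ((1/a) *\<^sub>R \<tau>)
      - M * (zp e w ((1/a) *\<^sub>R \<tau>) \<bullet> zp e w ((1/a) *\<^sub>R \<tau>)) / norm ((1/a) *\<^sub>R \<tau>))
    = g \<tau> - (- \<epsilon> + ((\<alpha> + Hs) *\<^sub>R e + \<beta> *\<^sub>R w) \<bullet> \<tau> + M * (zp e w \<tau> \<bullet> zp e w \<tau>)) + Hs * a"
proof -
  have u: "Uf g ((1/a) *\<^sub>R \<tau>) = (1/a) * g \<tau>"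
    using Uf_hom[of "1/a" g \<tau>] Uf_sphere[OF \<tau>, of g] a by simp
  have n: "norm ((1/a) *\<^sub>R \<tau>) = 1/a" using \<tau> a by simp
  have z: "zp e w ((1/a) *\<^sub>R \<tau>) = (1/a) *\<^sub>R zp e w \<tau>" by (rule zp_scale)
  show ?thesis
    unfolding u n z using a
    by (simp add: inner_add_left inner_add_right field_simps power2_eq_square inner_commute)
qed

lemma max_touch:
  assumes V: "viscosity_hess_plus_id_nonneg g" and gc: "continuous_on (sphere 0 1) g"
    and ee: "e \<bullet> e = 1" "w \<bullet> w = 1" "e \<bullet> w = 0"
    and s: "s0 < s1" "s1 < s2"
    and f0: "Uf g (e + s0 *\<^sub>R w) = \<alpha> + \<beta> * s0"
    and f2: "Uf g (e + s2 *\<^sub>R w) = \<alpha> + \<beta> * s2"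
    and f1: "Uf g (e + s1 *\<^sub>R w) > \<alpha> + \<beta> * s1"
  shows False
proof -
  let ?z = "zp e w"
  define lam where "lam = (\<lambda>s. \<alpha> + \<beta> * s)"
  define c0 where "c0 = Uf g (e + s1 *\<^sub>R w) - lam s1"
  have c0: "c0 > 0" using f1 by (simp add: c0_def lam_def)
  define B where "B = 2 + \<bar>s0\<bar> + \<bar>s2\<bar>"
  have B: "B > 0" by (simp add: B_def add_pos_nonneg)
  define \<epsilon> where "\<epsilon> = c0 / (4 * B)"
  have \<epsilon>: "\<epsilon> > 0" using c0 B by (simp add: \<epsilon>_def)
  have \<epsilon>B: "\<epsilon> * B = c0 / 4" using B by (simp add: \<epsilon>_def)
  have ne: "norm e = 1" using ee by (simp add: norm_eq_sqrt_inner)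
  have nw: "norm w = 1" using ee by (simp add: norm_eq_sqrt_inner)
  have Uc: "continuous_on (- {0}) (Uf g)" by (rule Uf_cont[OF gc])
  have pne: "e + s *\<^sub>R w \<noteq> 0" for s
  proof
    assume "e + s *\<^sub>R w = 0"
    then have "(e + s *\<^sub>R w) \<bullet> e = 0" by simp
    then show False using ee by (simp add: inner_add_left inner_commute[of w e])
  qed
  have ctat: "isCont (Uf g) (e + s *\<^sub>R w)" for s
    using Uc pne continuous_on_eq_continuous_at[of "- {0}" "Uf g"] by auto
  obtain d0 where d0: "d0 > 0" and d0P: "\<And>q. dist q (e + s0 *\<^sub>R w) < d0 \<Longrightarrow> dist (Uf g q) (Uf g (e + s0 *\<^sub>R w)) < c0 / 2"
    using ctat[of s0] c0 unfolding continuous_at_eps_delta by (metis half_gt_zero)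
  obtain d2 where d2: "d2 > 0" and d2P: "\<And>q. dist q (e + s2 *\<^sub>R w) < d2 \<Longrightarrow> dist (Uf g q) (Uf g (e + s2 *\<^sub>R w)) < c0 / 2"
    using ctat[of s2] c0 unfolding continuous_at_eps_delta by (metis half_gt_zero)
  define \<delta> where "\<delta> = min 1 (min d0 d2) / 2"
  have \<delta>: "\<delta> > 0" "\<delta> < d0" "\<delta> < d2" "\<delta> \<le> 1" using d0 d2 by (auto simp: \<delta>_def)
  define K where "K = {q. q \<bullet> e = 1 \<and> s0 \<le> q \<bullet> w \<and> q \<bullet> w \<le> s2 \<and> norm (?z q) \<le> \<delta>}"
  have zc: "continuous_on UNIV ?z" by (rule linear_continuous_on[OF zp_bl])
  have Kn1: "norm q \<ge> 1" if "q \<bullet> e = 1" for q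
    using norm_cauchy_schwarz[of q e] that ne by simp
  have KnB: "norm q \<le> B" if "q \<in> K" for q
  proof -
    have q: "q \<bullet> e = 1" "s0 \<le> q \<bullet> w" "q \<bullet> w \<le> s2" "norm (?z q) \<le> \<delta>" using that by (auto simp: K_def)
    have "norm q = norm (e + (q \<bullet> w) *\<^sub>R w + ?z q)" using zp_decomp[OF q(1), of w] by simp
    also have "\<dots> \<le> norm e + norm ((q \<bullet> w) *\<^sub>R w) + norm (?z q)" by (rule norm_triangle_le) (rule add_mono norm_triangle_ineq order_refl)+
    also have "\<dots> \<le> 1 + (\<bar>s0\<bar> + \<bar>s2\<bar>) + 1" using ne nw q \<delta> by (intro add_mono) auto
    finally show ?thesis by (simp add: B_def)
  qed
  have Kcomp: "compact K"
  unfolding compact_eq_bounded_closed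
  proof
    show "bounded K" unfolding bounded_iff using KnB by blast
    have "closed ({q. q \<bullet> e = 1} \<inter> {q. s0 \<le> q \<bullet> w} \<inter> {q. q \<bullet> w \<le> s2} \<inter> {q. norm (?z q) \<le> \<delta>})"
      by (intro closed_Int closed_Collect_eq closed_Collect_le continuous_intros continuous_on_norm zc)
    moreover have "K = {q. q \<bullet> e = 1} \<inter> {q. s0 \<le> q \<bullet> w} \<inter> {q. q \<bullet> w \<le> s2} \<inter> {q. norm (?z q) \<le> \<delta>}"
      by (auto simp: K_def)
    ultimately show "closed K" by simp
  qed
  have K0: "K \<subseteq> - {0}" using ee by (auto simp: K_def)
  define q1 where "q1 = e + s1 *\<^sub>R w"
  have zq1: "?z q1 = 0" using zp_in_span[OF ee, of 1 s1] by (simp add: q1_def)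
  have q1K: "q1 \<in> K" using ee s \<delta> zq1 by (simp add: K_def q1_def inner_add_left inner_commute[of w e])
  have Kne: "K \<noteq> {}" using q1K by blast
  define H0 where "H0 = (\<lambda>q. Uf g q - lam (q \<bullet> w) + \<epsilon> * norm q)"
  have H0c: "continuous_on K H0" unfolding H0_def lam_def
    by (intro continuous_intros continuous_on_subset[OF Uc K0])
  obtain qc where "qc \<in> K" "\<forall>q\<in>K. H0 q \<le> H0 qc"
    using continuous_attains_sup[OF Kcomp Kne H0c] by blast
  define C where "C = H0 qc"
  have C: "\<And>q. q \<in> K \<Longrightarrow> H0 q \<le> C" using \<open>\<forall>q\<in>K. H0 q \<le> H0 qc\<close> by (simp add: C_def)
  define M where "M = B * (\<bar>C\<bar> + c0 + 1) / \<delta>^2"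
  have M: "M > 0" using B \<delta> c0 by (simp add: M_def add_pos_pos)
  define H where "H = (\<lambda>q. H0 q - M * (?z q \<bullet> ?z q) / norm q)"
  have Hc: "continuous_on K H" unfolding H_def
    apply (intro continuous_intros H0c continuous_on_subset[OF zc])
    using K0 by auto
  obtain qs where qsK: "qs \<in> K" and qsM: "\<forall>q\<in>K. H q \<le> H qs"
    using continuous_attains_sup[OF Kcomp Kne Hc] by blast
  have Hle0: "H q \<le> H0 q" if "q \<in> K" for q
  proof -
    have "norm q > 0" using that K0 by auto
    then have "M * (?z q \<bullet> ?z q) / norm q \<ge> 0" using M by simp
    then show ?thesis by (simp add: H_def)
  qed
  have Hq1: "H q1 \<ge> c0"
  proof -
    have q1w: "q1 \<bullet> w = s1" using ee by (simp add: q1_def inner_add_left)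
    have "H q1 = c0 + \<epsilon> * norm q1" using zq1 q1w by (simp add: H_def H0_def c0_def lam_def) (simp add: q1_def)
    then show ?thesis using \<epsilon> by simp
  qed
  have Hs: "H qs \<ge> c0" using qsM q1K Hq1 by force
  have qs: "qs \<bullet> e = 1" "s0 \<le> qs \<bullet> w" "qs \<bullet> w \<le> s2" "norm (?z qs) \<le> \<delta>" using qsK by (auto simp: K_def)
  have nqs: "norm qs \<le> B" "norm qs \<ge> 1" using KnB[OF qsK] Kn1[OF qs(1)] by auto
  have qs_dec: "qs = e + (qs \<bullet> w) *\<^sub>R w + ?z qs" using zp_decomp[OF qs(1)] .
  have s0ne: "qs \<bullet> w \<noteq> s0"
  proof
    assume h: "qs \<bullet> w = s0"
    have "dist qs (e + s0 *\<^sub>R w) = norm (?z qs)"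
      using qs_dec h by (metis add_diff_cancel_left' dist_norm)
    then have "dist qs (e + s0 *\<^sub>R w) < d0" using qs \<delta> by simp
    then have "dist (Uf g qs) (Uf g (e + s0 *\<^sub>R w)) < c0 / 2" by (rule d0P)
    then have "Uf g qs < Uf g (e + s0 *\<^sub>R w) + c0 / 2" unfolding dist_real_def by linarith
    then have "H0 qs < c0 / 2 + \<epsilon> * norm qs" using f0 h by (simp add: H0_def lam_def)
    moreover have "\<epsilon> * norm qs \<le> c0 / 4" using \<epsilon>B nqs \<epsilon> by (metis mult_left_mono less_imp_le)
    ultimately show False using Hle0[OF qsK] Hs c0 by linarith
  qed
  have s2ne: "qs \<bullet> w \<noteq> s2"
  proof
    assume h: "qs \<bullet> w = s2"
    have "dist qs (e + s2 *\<^sub>R w) = norm (?z qs)"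
      using qs_dec h by (metis add_diff_cancel_left' dist_norm)
    then have "dist qs (e + s2 *\<^sub>R w) < d2" using qs \<delta> by simp
    then have "dist (Uf g qs) (Uf g (e + s2 *\<^sub>R w)) < c0 / 2" by (rule d2P)
    then have "Uf g qs < Uf g (e + s2 *\<^sub>R w) + c0 / 2" unfolding dist_real_def by linarith
    then have "H0 qs < c0 / 2 + \<epsilon> * norm qs" using f2 h by (simp add: H0_def lam_def)
    moreover have "\<epsilon> * norm qs \<le> c0 / 4" using \<epsilon>B nqs \<epsilon> by (metis mult_left_mono less_imp_le)
    ultimately show False using Hle0[OF qsK] Hs c0 by linarith
  qed
  have zlt: "norm (?z qs) < \<delta>"
  proof (rule ccontr)
    assume "\<not> ?thesis"
    then have zd: "norm (?z qs) = \<delta>" using qs by simp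
    then have zz: "?z qs \<bullet> ?z qs = \<delta>^2" by (simp add: power2_norm_eq_inner[symmetric])
    have "M * \<delta>^2 / B \<le> M * \<delta>^2 / norm qs"
    proof (rule divide_left_mono)
      show "norm qs \<le> B" using nqs by simp
      show "0 \<le> M * \<delta>^2" using M by simp
      have "norm qs > 0" using nqs(2) by linarith
      then show "0 < B * norm qs" using \<open>B > 0\<close> by simp
    qed
    moreover have "M * \<delta>^2 / B = \<bar>C\<bar> + c0 + 1" using B \<delta> by (simp add: M_def)
    ultimately have "H qs \<le> C - (\<bar>C\<bar> + c0 + 1)" using C[OF qsK] zz by (simp add: H_def)
    then show False using Hs c0 abs_ge_self[of C] by linarith
  qed
  define Hs where "Hs = H qs"
  define n where "n = norm qs"
  have n: "n \<ge> 1" using nqs by (simp add: n_def)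
  define \<sigma> where "\<sigma> = (1/n) *\<^sub>R qs"
  have qs0: "qs \<noteq> 0" using nqs(2) by (metis norm_zero not_one_le_zero)
  have \<sigma>n: "norm \<sigma> = 1" using qs0 by (simp add: \<sigma>_def n_def)
  have \<sigma>e: "\<sigma> \<bullet> e = 1/n" using qs by (simp add: \<sigma>_def)
  have \<sigma>w: "\<sigma> \<bullet> w = (qs \<bullet> w)/n" by (simp add: \<sigma>_def)
  have z\<sigma>: "?z \<sigma> = (1/n) *\<^sub>R ?z qs" unfolding \<sigma>_def by (rule zp_scale)
  define p where "p = (\<alpha> + Hs) *\<^sub>R e + \<beta> *\<^sub>R w"
  define \<psi> where "\<psi> = (\<lambda>\<tau>. - \<epsilon> + p \<bullet> \<tau> + M * (?z \<tau> \<bullet> ?z \<tau>))"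
  have key: "(\<tau> \<bullet> e) * H ((1/(\<tau> \<bullet> e)) *\<^sub>R \<tau>) = g \<tau> - \<psi> \<tau> + Hs * (\<tau> \<bullet> e)"
    if "norm \<tau> = 1" "\<tau> \<bullet> e > 0" for \<tau>
    using Hid[OF that(1) refl that(2), of g \<alpha> \<beta> w \<epsilon> M Hs] unfolding H_def H0_def lam_def \<psi>_def p_def by simp
  define Ob where "Ob = {y. 0 < y \<bullet> e} \<inter> {y. s0 * (y \<bullet> e) < y \<bullet> w} \<inter> {y. y \<bullet> w < s2 * (y \<bullet> e)} \<inter> {y. norm (?z y) < \<delta> * (y \<bullet> e)}"
  have "open Ob" unfolding Ob_def
    by (intro open_Int open_Collect_less continuous_intros continuous_on_norm zc)
  have "\<sigma> \<in> Ob"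
  proof -
    have "s0 < qs \<bullet> w" "qs \<bullet> w < s2" using qs s0ne s2ne by auto
    moreover have "norm (?z \<sigma>) = norm (?z qs) / n" using z\<sigma> n by simp
    ultimately show ?thesis unfolding Ob_def using \<sigma>e \<sigma>w n zlt
      by (auto simp: divide_strict_right_mono)
  qed
  obtain r where r: "r > 0" and rO: "ball \<sigma> r \<subseteq> Ob"
    using \<open>open Ob\<close> \<open>\<sigma> \<in> Ob\<close> open_contains_ball by blast
  have touch: "\<forall>\<tau>\<in>sphere 0 1. dist \<tau> \<sigma> < r \<longrightarrow> g \<tau> \<le> - \<epsilon> + p \<bullet> \<tau> + M * (?z \<tau> \<bullet> ?z \<tau>)"
  proof (intro ballI impI)
    fix \<tau> :: 'a assume \<tau>s: "\<tau> \<in> sphere 0 1" and "dist \<tau> \<sigma> < r"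
    then have "\<tau> \<in> Ob" using rO by (auto simp: dist_commute)
    then have Obs: "0 < \<tau> \<bullet> e" "s0 * (\<tau> \<bullet> e) < \<tau> \<bullet> w" "\<tau> \<bullet> w < s2 * (\<tau> \<bullet> e)" "norm (?z \<tau>) < \<delta> * (\<tau> \<bullet> e)"
      by (auto simp: Ob_def)
    define a where "a = \<tau> \<bullet> e"
    have a: "a > 0" using Obs by (simp add: a_def)
    define q where "q = (1/a) *\<^sub>R \<tau>"
    have "q \<in> K"
    proof -
      have "q \<bullet> e = 1" using a by (simp add: q_def a_def)
      moreover have "q \<bullet> w = (\<tau> \<bullet> w) / a" by (simp add: q_def)
      moreover have "s0 < (\<tau> \<bullet> w) / a" "(\<tau> \<bullet> w) / a < s2" using Obs a
        by (simp_all add: a_def field_simps)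
      moreover have "norm (?z q) = norm (?z \<tau>) / a" using a by (simp add: q_def zp_scale)
      moreover have "norm (?z \<tau>) / a < \<delta>" using Obs a by (simp add: a_def field_simps)
      ultimately show ?thesis by (auto simp: K_def)
    qed
    then have "H q \<le> Hs" using qsM by (simp add: Hs_def)
    then have "a * H q \<le> a * Hs" using a by simp
    moreover have "a * H q = g \<tau> - \<psi> \<tau> + Hs * a" using key[of \<tau>] \<tau>s a by (simp add: q_def a_def)
    ultimately show "g \<tau> \<le> - \<epsilon> + p \<bullet> \<tau> + M * (?z \<tau> \<bullet> ?z \<tau>)" by (simp add: \<psi>_def algebra_simps)
  qed
  have eq: "g \<sigma> = - \<epsilon> + p \<bullet> \<sigma> + M * (?z \<sigma> \<bullet> ?z \<sigma>)"
  proof -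
    have "(1 / (\<sigma> \<bullet> e)) *\<^sub>R \<sigma> = qs" using n unfolding \<sigma>e by (simp add: \<sigma>_def)
    then have "(\<sigma> \<bullet> e) * Hs = g \<sigma> - \<psi> \<sigma> + Hs * (\<sigma> \<bullet> e)"
      using key[OF \<sigma>n] \<sigma>e n by (simp add: Hs_def)
    then show ?thesis by (simp add: \<psi>_def algebra_simps)
  qed
  show False
    by (rule touch_contra[OF V ee \<epsilon> _ \<sigma>n _ r touch eq]) (use M \<sigma>e n in auto)
qed

lemma line_convex_e:
  assumes V: "viscosity_hess_plus_id_nonneg g" and gc: "continuous_on (sphere 0 1) g"
    and ee: "e \<bullet> e = 1" "w \<bullet> w = 1" "e \<bullet> w = 0"
  shows "convex_on UNIV (\<lambda>s. Uf g (e + s *\<^sub>R w))"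
proof (rule convex_onI)
  show "convex (UNIV :: real set)" by simp
  fix t x y :: real assume t: "0 < t" "t < 1"
  let ?f = "\<lambda>s. Uf g (e + s *\<^sub>R w)"
  show "?f ((1 - t) *\<^sub>R x + t *\<^sub>R y) \<le> (1 - t) * ?f x + t * ?f y"
  proof (rule ccontr)
    assume viol: "\<not> ?thesis"
    have xy: "x \<noteq> y"
    proof
      assume "x = y"
      then have "(1 - t) *\<^sub>R x + t *\<^sub>R y = x" by (simp add: algebra_simps)
      then show False using viol \<open>x = y\<close> by (simp add: algebra_simps)
    qed
    define \<beta> where "\<beta> = (?f y - ?f x) / (y - x)"
    define \<alpha> where "\<alpha> = ?f x - \<beta> * x"
    have fx: "?f x = \<alpha> + \<beta> * x" by (simp add: \<alpha>_def)
    have "\<beta> * (y - x) = ?f y - ?f x" using xy by (simp add: \<beta>_def)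
    moreover have "\<alpha> + \<beta> * y = ?f x + \<beta> * (y - x)" unfolding \<alpha>_def by (simp add: right_diff_distrib)
    ultimately have fy: "?f y = \<alpha> + \<beta> * y" by linarith
    define s1 where "s1 = (1 - t) * x + t * y"
    have f1: "?f s1 > \<alpha> + \<beta> * s1"
    proof -
      have "(1 - t) * ?f x + t * ?f y = \<alpha> + \<beta> * s1" unfolding fx fy s1_def by (simp add: algebra_simps)
      then show ?thesis using viol by (simp add: s1_def)
    qed
    show False
    proof (cases "x < y")
      case True
      then have xlt: "x < y" .
      have a1: "s1 - x = t * (y - x)" by (simp add: s1_def algebra_simps)
      have a2: "y - s1 = (1 - t) * (y - x)" by (simp add: s1_def algebra_simps)
      have a3: "t * (y - x) > 0" using xlt t by simp
      have a4: "(1 - t) * (y - x) > 0" using xlt t by simp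
      have "s1 - x > 0" using a1 a3 by simp
      then have b1: "x < s1" by simp
      have "y - s1 > 0" using a2 a4 by simp
      then have b2: "s1 < y" by simp
      note b1 b2
      then show False using max_touch[OF V gc ee _ _ fx fy f1] by blast
    next
      case False
      then have "y < x" using xy by simp
      have a1: "s1 - y = (1 - t) * (x - y)" by (simp add: s1_def algebra_simps)
      have a2: "x - s1 = t * (x - y)" by (simp add: s1_def algebra_simps)
      have a3: "t * (x - y) > 0" using \<open>y < x\<close> t by simp
      have a4: "(1 - t) * (x - y) > 0" using \<open>y < x\<close> t by simp
      have "s1 - y > 0" using a1 a4 by simp
      then have b1: "y < s1" by simp
      have "x - s1 > 0" using a2 a3 by simp
      then have b2: "s1 < x" by simp
      note b1 b2
      then show False using max_touch[OF V gc ee _ _ fy fx f1] by blast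
    qed
  qed
qed

lemma Uf_nonneg:
  assumes "\<forall>\<sigma>\<in>sphere 0 1. g \<sigma> \<ge> 0" shows "Uf g y \<ge> 0"
proof (cases "y = 0")
  case True then show ?thesis by (simp add: Uf_def)
next
  case False
  then have "y /\<^sub>R norm y \<in> sphere 0 1" by simp
  then show ?thesis using assms by (simp add: Uf_def)
qed

lemma Uf_ray:
  "Uf g (r *\<^sub>R d) = max (r * Uf g d) (- r * Uf g (- d))"
  if "\<forall>\<sigma>\<in>sphere 0 1. g \<sigma> \<ge> 0"
proof -
  have A: "Uf g d \<ge> 0" "Uf g (- d) \<ge> 0" using Uf_nonneg[OF that] by auto
  consider "r > 0" | "r = 0" | "r < 0" by linarith
  then show ?thesis
  proof cases
    case 1
    have "r * Uf g d \<ge> 0" "- r * Uf g (- d) \<le> 0" using 1 A by simp_all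
    then show ?thesis using Uf_hom[OF 1, of g d] by (simp add: max_def)
  next
    case 2 then show ?thesis by (simp add: Uf_def)
  next
    case 3
    have "r *\<^sub>R d = (- r) *\<^sub>R (- d)" by simp
    then have "Uf g (r *\<^sub>R d) = - r * Uf g (- d)" using Uf_hom[of "- r" g "- d"] 3 by simp
    moreover have "r * Uf g d \<le> 0" "- r * Uf g (- d) \<ge> 0" using 3 A by (simp_all add: mult_nonpos_nonneg)
    ultimately show ?thesis by (simp add: max_def)
  qed
qed

lemma max_lin_convex:
  fixes t u v A B :: real
  assumes t: "0 \<le> t" "t \<le> 1"
  shows "max (((1 - t) * u + t * v) * A) (- ((1 - t) * u + t * v) * B)
     \<le> (1 - t) * max (u * A) (- u * B) + t * max (v * A) (- v * B)"
proof (rule max.boundedI)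
  have i1: "(1 - t) * (u * A) \<le> (1 - t) * max (u * A) (- u * B)" using t by (intro mult_left_mono) auto
  have i2: "(1 - t) * (- u * B) \<le> (1 - t) * max (u * A) (- u * B)" using t by (intro mult_left_mono) auto
  have i3: "t * (v * A) \<le> t * max (v * A) (- v * B)" using t by (intro mult_left_mono) auto
  have i4: "t * (- v * B) \<le> t * max (v * A) (- v * B)" using t by (intro mult_left_mono) auto
  have e1: "((1 - t) * u + t * v) * A = (1 - t) * (u * A) + t * (v * A)" by (simp add: algebra_simps)
  have e2: "- ((1 - t) * u + t * v) * B = (1 - t) * (- u * B) + t * (- v * B)" by (simp add: algebra_simps)
  show "((1 - t) * u + t * v) * A \<le> (1 - t) * max (u * A) (- u * B) + t * max (v * A) (- v * B)"
    unfolding e1 using i1 i3 by linarith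
  show "- ((1 - t) * u + t * v) * B \<le> (1 - t) * max (u * A) (- u * B) + t * max (v * A) (- v * B)"
    unfolding e2 using i2 i4 by linarith
qed

lemma line_convex:
  assumes V: "viscosity_hess_plus_id_nonneg g" and gc: "continuous_on (sphere 0 1) g"
    and gp: "\<forall>\<sigma>\<in>sphere 0 1. g \<sigma> \<ge> 0"
  shows "convex_on UNIV (\<lambda>s. Uf g (x + s *\<^sub>R d))"
proof (cases "d = 0")
  case True then show ?thesis by (simp add: convex_on_const)
next
  case dnz: False
  define \<mu> where "\<mu> = (x \<bullet> d) / (d \<bullet> d)"
  define c where "c = x - \<mu> *\<^sub>R d"
  have dd: "d \<bullet> d > 0" using dnz by simp
  have cd: "c \<bullet> d = 0" using dd by (simp add: c_def \<mu>_def inner_diff_left)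
  have xc: "x = c + \<mu> *\<^sub>R d" by (simp add: c_def)
  show ?thesis
  proof (cases "c = 0")
    case True
    define A where "A = Uf g d"
    define Bv where "Bv = Uf g (- d)"
    have A: "A \<ge> 0" "Bv \<ge> 0" using Uf_nonneg[OF gp] by (auto simp: A_def Bv_def)
    have eqf: "Uf g (x + s *\<^sub>R d) = max ((\<mu> + s) * A) (- (\<mu> + s) * Bv)" for s
    proof -
      have "x + s *\<^sub>R d = (\<mu> + s) *\<^sub>R d" using xc True by (simp add: algebra_simps)
      then show ?thesis using Uf_ray[OF gp, of "\<mu> + s" d] by (simp add: A_def Bv_def)
    qed
    show ?thesis
    proof (rule convex_onI)
      show "convex (UNIV :: real set)" by simp
      fix t a b :: real assume t: "0 < t" "t < 1"
      let ?u = "\<mu> + a" and ?v = "\<mu> + b"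
      have m: "\<mu> + ((1 - t) *\<^sub>R a + t *\<^sub>R b) = (1 - t) * ?u + t * ?v" by (simp add: algebra_simps)
      have "max (((1 - t) * ?u + t * ?v) * A) (- ((1 - t) * ?u + t * ?v) * Bv)
          \<le> (1 - t) * max (?u * A) (- ?u * Bv) + t * max (?v * A) (- ?v * Bv)"
        by (rule max_lin_convex) (use t in auto)
      then show "Uf g (x + ((1 - t) *\<^sub>R a + t *\<^sub>R b) *\<^sub>R d) \<le> (1 - t) * Uf g (x + a *\<^sub>R d) + t * Uf g (x + b *\<^sub>R d)"
        unfolding eqf m by simp
    qed
  next
    case cnz: False
    define nc where "nc = norm c"
    have nc: "nc > 0" using cnz by (simp add: nc_def)
    define e where "e = (1/nc) *\<^sub>R c"
    define w where "w = (1/norm d) *\<^sub>R d"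
    have ee: "e \<bullet> e = 1" "w \<bullet> w = 1" "e \<bullet> w = 0"
      using nc dnz cd by (simp_all add: e_def w_def nc_def power2_norm_eq_inner[symmetric] power2_eq_square)
    define Kc where "Kc = norm d / nc"
    define \<kappa> where "\<kappa> = (\<lambda>s. (\<mu> + s) * Kc)"
    have eqf: "Uf g (x + s *\<^sub>R d) = nc * Uf g (e + \<kappa> s *\<^sub>R w)" for s
    proof -
      have a1: "nc *\<^sub>R e = c" using nc by (simp add: e_def)
      have a2: "nc * (\<kappa> s * (1 / norm d)) = \<mu> + s" using nc dnz by (simp add: \<kappa>_def Kc_def)
      have "nc *\<^sub>R (e + \<kappa> s *\<^sub>R w) = nc *\<^sub>R e + (nc * (\<kappa> s * (1 / norm d))) *\<^sub>R d"
        by (simp add: w_def scaleR_add_right)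
      also have "\<dots> = x + s *\<^sub>R d" unfolding a1 a2 xc by (simp add: algebra_simps)
      finally have "x + s *\<^sub>R d = nc *\<^sub>R (e + \<kappa> s *\<^sub>R w)" by simp
      then show ?thesis using Uf_hom[OF nc] by simp
    qed
    have F1: "convex_on UNIV (\<lambda>s. Uf g (e + s *\<^sub>R w))" by (rule line_convex_e[OF V gc ee])
    show ?thesis
    proof (rule convex_onI)
      show "convex (UNIV :: real set)" by simp
      fix t a b :: real assume t: "0 < t" "t < 1"
      have k: "\<kappa> ((1 - t) *\<^sub>R a + t *\<^sub>R b) = (1 - t) *\<^sub>R \<kappa> a + t *\<^sub>R \<kappa> b"
        by (simp add: \<kappa>_def algebra_simps)
      have "Uf g (e + \<kappa> ((1 - t) *\<^sub>R a + t *\<^sub>R b) *\<^sub>R w) \<le> (1 - t) * Uf g (e + \<kappa> a *\<^sub>R w) + t * Uf g (e + \<kappa> b *\<^sub>R w)"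
        unfolding k using convex_onD[OF F1, of t "\<kappa> a" "\<kappa> b"] t by simp
      then have "nc * Uf g (e + \<kappa> ((1 - t) *\<^sub>R a + t *\<^sub>R b) *\<^sub>R w) \<le> nc * ((1 - t) * Uf g (e + \<kappa> a *\<^sub>R w) + t * Uf g (e + \<kappa> b *\<^sub>R w))"
        using nc by (intro mult_left_mono) auto
      then show "Uf g (x + ((1 - t) *\<^sub>R a + t *\<^sub>R b) *\<^sub>R d) \<le> (1 - t) * Uf g (x + a *\<^sub>R d) + t * Uf g (x + b *\<^sub>R d)"
        unfolding eqf by (simp add: algebra_simps)
    qed
  qed
qed

lemma hard_dir:
  assumes V: "viscosity_hess_plus_id_nonneg g" and gc: "continuous_on (sphere 0 1) g"
    and gp: "\<forall>\<sigma>\<in>sphere 0 1. g \<sigma> \<ge> 0"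
  shows "convex_on UNIV (Uf g)"
proof (rule convex_onI)
  show "convex (UNIV :: 'a set)" by simp
  fix t :: real and x y :: 'a assume t: "0 < t" "t < 1"
  have L: "convex_on UNIV (\<lambda>s. Uf g (x + s *\<^sub>R (y - x)))" by (rule line_convex[OF V gc gp])
  have "Uf g (x + ((1 - t) *\<^sub>R 0 + t *\<^sub>R 1) *\<^sub>R (y - x)) \<le> (1 - t) * Uf g (x + 0 *\<^sub>R (y - x)) + t * Uf g (x + 1 *\<^sub>R (y - x))"
    using convex_onD[OF L, of t 0 1] t by simp
  moreover have "x + ((1 - t) *\<^sub>R 0 + t *\<^sub>R 1) *\<^sub>R (y - x) = (1 - t) *\<^sub>R x + t *\<^sub>R y" by (simp add: algebra_simps)
  ultimately show "Uf g ((1 - t) *\<^sub>R x + t *\<^sub>R y) \<le> (1 - t) * Uf g x + t * Uf g y" by simp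
qed

theorem proposition5p1:
  fixes g :: "'a::euclidean_space \<Rightarrow> real"
  assumes "continuous_on (sphere 0 1) g"
    and "\<forall>\<sigma>\<in>sphere 0 1. g \<sigma> \<ge> 0"
  shows "convex_on UNIV (\<lambda>x. norm x * g (x /\<^sub>R norm x)) \<longleftrightarrow> viscosity_hess_plus_id_nonneg g"
proof -
  have U: "(\<lambda>x. norm x * g (x /\<^sub>R norm x)) = Uf g" by (simp add: Uf_def[abs_def])
  show ?thesis unfolding U
  proof
    assume cvx: "convex_on UNIV (Uf g)"
    show "viscosity_hess_plus_id_nonneg g"
      unfolding viscosity_hess_plus_id_nonneg_def
    proof (intro ballI allI impI)
      fix \<sigma> :: 'a and \<psi> v
      assume \<sigma>: "\<sigma> \<in> sphere 0 1"
        and h: "C2_near_on_sphere \<psi> \<sigma> \<and> (\<exists>e>0. \<forall>\<tau>\<in>sphere 0 1. dist \<tau> \<sigma> < e \<longrightarrow> g \<tau> \<le> \<psi> \<tau>) \<and> g \<sigma> = \<psi> \<sigma>"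
        and v: "v \<bullet> \<sigma> = 0"
      from h obtain e where e: "e > 0" and tch: "\<forall>\<tau>\<in>sphere 0 1. dist \<tau> \<sigma> < e \<longrightarrow> g \<tau> \<le> \<psi> \<tau>" by blast
      have \<sigma>n: "norm \<sigma> = 1" using \<sigma> by simp
      from h have C2: "C2_near_on_sphere \<psi> \<sigma>" and eq: "g \<sigma> = \<psi> \<sigma>" by blast+
      show "sphere_hess \<psi> \<sigma> v + \<psi> \<sigma> * (norm v)\<^sup>2 \<ge> 0"
        by (rule easy_dir[OF cvx \<sigma>n C2 tch e eq v])
    qed
  next
    assume "viscosity_hess_plus_id_nonneg g"
    then show "convex_on UNIV (Uf g)" by (rule hard_dir[OF _ assms])
  qed
qed

end
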